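(* Let $k\geq 2$ and $n\geq k+1$ be integers. In the quasi-shuffle algebra $(\mathcal{H},\ast)$, $$ \begin{aligned} \sum_{\substack{ r, s_i\geq 1,\ s_1\geq 2 \\ r+s_1+\cdots +s_{k-1}=n}} z_{r}\ast z_{s_1,\dots, s_{k-1}} = &\sum_{\substack{ t_i\geq 1,\ t_1=1,\ t_2\geq 2 \\ t_1+\cdots+t_{k}=n}} z_{t_1,t_2,\dots, t_{k}} +(k-1) \sum_{\substack{t_i\geq 1,\ t_1\geq 2,\ t_2=1 \\ t_1+\cdots+t_{k}=n }} z_{t_1,\dots,t_{k}}\\ &+k \sum_{\substack{t_i\geq 1,\ t_1\geq 2,\ t_2\geq 2 \\ t_1+\cdots+t_{k}=n}} z_{t_1,\dots, t_{k}} + (n-k) \sum_{\substack{u_i\geq 1,\ u_1\geq 2 \\ u_1+\cdots+u_{k-1}=n }} z_{u_1,\dots, u_{k-1}}. \end{aligned} $$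
   Context: Let $\mathcal{H}$ be the free $\mathbb{Z}$-module on the free monoid generated by letters $z_s$ ($s\geq 1$ an integer); write $z_{s_1,\dots,s_k}:=z_{s_1}z_{s_2}\cdots z_{s_k}$ for a word and $1$ for the empty word. The quasi-shuffle (stuffle) product $\ast$ is the $\mathbb{Z}$-bilinear product on $\mathcal{H}$ defined on words recursively by $1\ast u=u\ast 1=u$ and $(z_{r}u)\ast(z_{s}v)=z_{r}\,(u\ast (z_{s}v))+z_{s}\,((z_{r}u)\ast v)+z_{r+s}\,(u\ast v)$ for words $u,v$ and integers $r,s\geq 1$ (juxtaposition denotes concatenation, extended linearly). *)

theory Defs
  imports Main
begin

text \<open>An element of the free Z-module H on words z_{s_1..s_k} (letters s_i \<ge> 1) is
  represented by its coefficient function on words (finitely supported); a word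
  z_{s_1,...,s_k} is the list [s_1,...,s_k], the empty word 1 is [].\<close>

type_synonym H = "nat list \<Rightarrow> int"

definition word :: "nat list \<Rightarrow> H" where
  "word u = (\<lambda>w. if w = u then 1 else 0)"

definition scale :: "int \<Rightarrow> H \<Rightarrow> H" where
  "scale c f = (\<lambda>w. c * f w)"

definition Hadd :: "H \<Rightarrow> H \<Rightarrow> H" where
  "Hadd f g = (\<lambda>w. f w + g w)"

definition Hsum :: "('a \<Rightarrow> H) \<Rightarrow> 'a set \<Rightarrow> H" where
  "Hsum F A = (\<lambda>w. \<Sum>a\<in>A. F a w)"

text \<open>Left concatenation by a letter, extended linearly: coefficient of w in z_a f.\<close>
definition cons_letter :: "nat \<Rightarrow> H \<Rightarrow> H" where
  "cons_letter a f = (\<lambda>w. case w of [] \<Rightarrow> 0 | b # w' \<Rightarrow> (if b = a then f w' else 0))"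

fun stuffle :: "nat list \<Rightarrow> nat list \<Rightarrow> H" where
  "stuffle [] v = word v"
| "stuffle (r # u) [] = word (r # u)"
| "stuffle (r # u) (s # v) =
     Hadd (Hadd (cons_letter r (stuffle u (s # v)))
                (cons_letter s (stuffle (r # u) v)))
          (cons_letter (r + s) (stuffle u v))"

end

theory Submission imports Defs begin

definition "AA k n = {(r, s). r \<ge> 1 \<and> length s = k - 1 \<and> (\<forall>x\<in>set s. x \<ge> 1) \<and> s ! 0 \<ge> 2
                    \<and> r + sum_list s = (n::nat)}"
definition "Good n w = ((\<forall>x\<in>set w. x \<ge> (1::nat)) \<and> sum_list w = n)"

lemma stuffle_single:
  "stuffle [r] s w = (\<Sum>i\<le>length s. of_bool (w = take i s @ r # drop i s))
                    + (\<Sum>i<length s. of_bool (w = s[i := r + s!i]))"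
proof (induction s arbitrary: w)
  case Nil
  then show ?case by (simp add: word_def)
next
  case (Cons a s)
  show ?case
  proof (cases w)
    case Nil
    have e: "\<And>i x. [] \<noteq> (a # s)[i := x]" by (metis list.discI list_update_nonempty)
    show ?thesis using Nil by (simp add: Hadd_def cons_letter_def e del: list_update.simps)
  next
    case (Cons b w')
    have "stuffle [r] (a # s) w = of_bool (b = r \<and> w' = a # s) + of_bool (b = a) * stuffle [r] s w'
          + of_bool (b = r + a \<and> w' = s)"
      using Cons by (simp add: Hadd_def cons_letter_def word_def)
    also have "\<dots> = of_bool (w = take 0 (a#s) @ r # drop 0 (a#s)) + (\<Sum>i\<le>length s. of_bool (w = take (Suc i) (a#s) @ r # drop (Suc i) (a#s)))
      + (of_bool (w = (a#s)[0 := r + (a#s)!0]) + (\<Sum>i<length s. of_bool (w = (a#s)[Suc i := r + (a#s)!Suc i])))"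
    proof -
      have t1: "\<And>i. of_bool (w = take (Suc i) (a#s) @ r # drop (Suc i) (a#s)) = (of_bool (b = a) * of_bool (w' = take i s @ r # drop i s) :: int)"
        using Cons by simp
      have t2: "\<And>i. of_bool (w = (a#s)[Suc i := r + (a#s)!Suc i]) = (of_bool (b = a) * of_bool (w' = s[i := r + s!i]) :: int)"
        using Cons by simp
      show ?thesis unfolding t1 t2 Cons.IH sum_distrib_left[symmetric] using Cons
        by (simp add: algebra_simps)
    qed
    also have "\<dots> = (\<Sum>i\<le>length (a # s). of_bool (w = take i (a # s) @ r # drop i (a # s))) +
     (\<Sum>i<length (a # s). of_bool (w = (a # s)[i := r + (a # s) ! i]))"
      by (simp only: length_Cons sum.atMost_Suc_shift sum.lessThan_Suc_shift)
    finally show ?thesis .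
  qed
qed


lemma ins_term:
  assumes "2 \<le> k" "i < length w"
  shows "((w!i, take i w @ drop (Suc i) w) \<in> AA k n) \<longleftrightarrow>
         length w = k \<and> Good n w \<and> (if i = 0 then w!1 \<ge> 2 else w!0 \<ge> 2)"
proof -
  define xs where "xs = take i w"
  define ys where "ys = drop (Suc i) w"
  define y where "y = w!i"
  have w: "w = xs @ y # ys" unfolding xs_def ys_def y_def using assms(2) by (simp add: id_take_nth_drop)
  have li: "length xs = i" using assms(2) xs_def by simp
  show ?thesis
  proof (cases xs)
    case Nil
    then show ?thesis using assms li unfolding w AA_def Good_def by (auto simp: add.assoc)
  next
    case (Cons x xs')
    then show ?thesis using assms li unfolding w AA_def Good_def by (auto simp: add.assoc)
  qed
qed

lemma merge_term:
  assumes "i < length w" "r \<le> w!i"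
  shows "((r, w[i := w!i - r]) \<in> AA k n) \<longleftrightarrow>
         length w = k - 1 \<and> Good n w \<and> w!0 \<ge> 2 \<and> 1 \<le> r \<and> r < w!i \<and> (i = 0 \<longrightarrow> r + 2 \<le> w!0)"
proof -
  have s: "sum_list (w[i := w!i - r]) = sum_list w - r"
  proof -
    have "w!i \<le> sum_list w" using assms(1) by (simp add: elem_le_sum_list)
    then show ?thesis using assms by (simp add: sum_list_update)
  qed
  have r: "r \<le> sum_list w" using assms elem_le_sum_list order_trans by blast
  have set: "(\<forall>x\<in>set (w[i := w!i - r]). x \<ge> 1) \<longleftrightarrow> (\<forall>j<length w. j \<noteq> i \<longrightarrow> w!j \<ge> 1) \<and> w!i - r \<ge> 1"
    using assms(1) unfolding all_set_conv_all_nth by (auto simp: nth_list_update)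
  have set2: "(\<forall>x\<in>set w. x \<ge> 1) \<longleftrightarrow> (\<forall>j<length w. w!j \<ge> 1)"
    by (simp add: all_set_conv_all_nth)
  have n0: "w[i := w!i - r] ! 0 = (if i = 0 then w!0 - r else w!0)"
    using assms(1) by (auto simp: nth_list_update)
  show ?thesis unfolding AA_def Good_def using s r set set2 n0 assms
    apply (simp only: mem_Collect_eq case_prod_conv length_list_update)
    apply (cases "i = 0")
    apply auto
    done
qed


lemma finite_AA: "finite (AA k n)"
proof -
  have "AA k n \<subseteq> {..n} \<times> {s. set s \<subseteq> {..n} \<and> length s = k - 1}"
    unfolding AA_def using member_le_sum_list by fastforce
  moreover have "finite ({..n} \<times> {s. set s \<subseteq> {..n} \<and> length s = k - 1})"
    by (intro finite_cartesian_product finite_lists_length_eq) auto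
  ultimately show ?thesis by (rule finite_subset)
qed

lemma finite_words: "finite {t. length t = m \<and> P t \<and> sum_list t = (n::nat)}"
proof -
  have "{t. length t = m \<and> P t \<and> sum_list t = n} \<subseteq> {s. set s \<subseteq> {..n} \<and> length s = m}"
    using member_le_sum_list by fastforce
  moreover have "finite {s. set s \<subseteq> {..n} \<and> length s = m}"
    by (intro finite_lists_length_eq) auto
  ultimately show ?thesis by (rule finite_subset)
qed

lemma finite_words':
  assumes "\<And>t. P t \<Longrightarrow> length t = m \<and> sum_list t = (n::nat)"
  shows "finite {t. P t}"
  by (rule finite_subset[OF _ finite_words[of m "\<lambda>_. True" n]]) (use assms in auto)

lemma Hsum_word_at:
  assumes "finite B" shows "Hsum word B w = of_bool (w \<in> B)"
  unfolding Hsum_def word_def using assms by simp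

lemma ins_part:
  assumes "2 \<le> k"
  shows "(\<Sum>i\<le>k - 1. (of_bool (i < length w \<and> (w!i, take i w @ drop (Suc i) w) \<in> AA k n) :: int))
       = of_bool (length w = k \<and> Good n w) * (of_bool (w!1 \<ge> 2) + (int k - 1) * of_bool (w!0 \<ge> 2))"
proof (cases "length w = k \<and> Good n w")
  case True
  have k0: "0 < k" using assms by simp
  have "(\<Sum>i\<le>k - 1. (of_bool (i < length w \<and> (w!i, take i w @ drop (Suc i) w) \<in> AA k n) :: int))
     = of_bool (0 < length w \<and> (w!0, take 0 w @ drop (Suc 0) w) \<in> AA k n)
       + (\<Sum>i<k - 1. of_bool (Suc i < length w \<and> (w!Suc i, take (Suc i) w @ drop (Suc (Suc i)) w) \<in> AA k n))"
    by (rule sum.atMost_shift)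
  also have "\<dots> = of_bool (w!1 \<ge> 2) + (\<Sum>i<k - 1. of_bool (w!0 \<ge> 2))"
  proof -
    have a: "of_bool (0 < length w \<and> (w!0, take 0 w @ drop (Suc 0) w) \<in> AA k n) = (of_bool (w!1 \<ge> 2) :: int)"
      using True k0 assms ins_term[of k 0 w n] by simp
    have b: "\<And>i. i \<in> {..<k-1} \<Longrightarrow> of_bool (Suc i < length w \<and> (w!Suc i, take (Suc i) w @ drop (Suc (Suc i)) w) \<in> AA k n) = (of_bool (w!0 \<ge> 2) :: int)"
    proof -
      fix i assume "i \<in> {..<k-1}"
      then have "Suc i < length w" using True by auto
      then show "?thesis i" using True assms ins_term[of k "Suc i" w n] by simp
    qed
    show ?thesis by (simp only: a sum.cong[OF refl b])
  qed
  also have "\<dots> = of_bool (w!1 \<ge> 2) + (int k - 1) * of_bool (w!0 \<ge> 2)"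
    using k0 by (simp add: of_nat_diff)
  finally show ?thesis using True by simp
next
  case False
  then show ?thesis using assms by (auto simp: ins_term intro!: sum.neutral)
qed


lemma merge_part:
  assumes "2 \<le> k"
  shows "(\<Sum>i<k-1. int (card {r. i < length w \<and> r \<le> w!i \<and> (r, w[i := w!i - r]) \<in> AA k n}))
       = (if length w = k-1 \<and> Good n w \<and> w!0 \<ge> 2 then int n - int k else 0)"
proof (cases "length w = k-1 \<and> Good n w \<and> w!0 \<ge> 2")
  case True
  have all1: "\<And>i. i < length w \<Longrightarrow> w!i \<ge> 1" using True unfolding Good_def
    by (simp add: all_set_conv_all_nth)
  have t: "int (card {r. i < length w \<and> r \<le> w!i \<and> (r, w[i := w!i - r]) \<in> AA k n})
        = int (w!i) - 1 - of_bool (i = 0)" if i: "i < k - 1" for i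
  proof (cases "i = 0")
    case True': True
    have "{r. i < length w \<and> r \<le> w!i \<and> (r, w[i := w!i - r]) \<in> AA k n} = {1..w!0 - 2}"
      using True True' i merge_term[of i w _ k n] by (auto; arith)
    then show ?thesis using True True' by (simp add: of_nat_diff)
  next
    case False
    have "{r. i < length w \<and> r \<le> w!i \<and> (r, w[i := w!i - r]) \<in> AA k n} = {1..<w!i}"
      using True False i merge_term[of i w _ k n] by auto
    then show ?thesis using False all1[of i] True i by (simp add: of_nat_diff)
  qed
  have "(\<Sum>i<k-1. int (card {r. i < length w \<and> r \<le> w!i \<and> (r, w[i := w!i - r]) \<in> AA k n}))
      = (\<Sum>i<k-1. int (w!i) - 1 - of_bool (i = 0))" by (rule sum.cong[OF refl]) (simp add: t)
  also have "\<dots> = (\<Sum>i<k-1. int (w!i)) - int (k - 1) - 1"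
    using assms by (simp add: sum_subtractf)
  also have "(\<Sum>i<k-1. int (w!i)) = int n"
  proof -
    have "int (sum_list w) = (\<Sum>i<length w. int (w!i))"
      by (simp add: sum_list_sum_nth atLeast0LessThan)
    then show ?thesis using True unfolding Good_def by simp
  qed
  finally show ?thesis using True assms by (simp add: of_nat_diff)
next
  case False
  have "\<And>i. {r. i < length w \<and> r \<le> w!i \<and> (r, w[i := w!i - r]) \<in> AA k n} = {}"
    using False merge_term by blast
  then show ?thesis using False by (simp only: card.empty of_nat_0 sum.neutral_const if_False)
qed


lemma ins_iff:
  assumes "i \<le> length s"
  shows "(w = take i s @ r # drop i s) \<longleftrightarrow> (i < length w \<and> (r, s) = (w!i, take i w @ drop (Suc i) w))"
proof
  assume w: "w = take i s @ r # drop i s"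
  then show "i < length w \<and> (r, s) = (w!i, take i w @ drop (Suc i) w)"
    using assms by (simp add: nth_append min_def)
next
  assume "i < length w \<and> (r, s) = (w!i, take i w @ drop (Suc i) w)"
  then show "w = take i s @ r # drop i s"
    by (simp add: id_take_nth_drop min_def)
qed

lemma merge_iff:
  fixes s w :: "nat list"
  assumes "i < length s"
  shows "(w = s[i := r + s!i]) \<longleftrightarrow> (i < length w \<and> r \<le> w!i \<and> s = w[i := w!i - r])"
proof
  assume w: "w = s[i := r + s!i]"
  then show "i < length w \<and> r \<le> w!i \<and> s = w[i := w!i - r]"
  proof -
    have "r + s!i - r = s!i" by simp
    then have "s[i := r + s!i - r] = s" by simp
    then show ?thesis using w assms by simp
  qed
next
  assume h: "i < length w \<and> r \<le> w!i \<and> s = w[i := w!i - r]"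
  then show "w = s[i := r + s!i]" by simp
qed

lemma sum_delta_pair:
  assumes "finite A"
  shows "(\<Sum>x\<in>A. (of_bool (P \<and> x = a) :: int)) = of_bool (P \<and> a \<in> A)"
  using assms by (cases P) (simp_all add: of_bool_def)

theorem theorem2p4:
  fixes k n :: nat
  assumes "2 \<le> k" and "k + 1 \<le> n"
  shows "Hsum (\<lambda>(r, s). stuffle [r] s)
           {(r, s). r \<ge> 1 \<and> length s = k - 1 \<and> (\<forall>x\<in>set s. x \<ge> 1) \<and> s ! 0 \<ge> 2
                    \<and> r + sum_list s = n}
       = Hadd (Hadd (Hadd
           (Hsum word {t. length t = k \<and> (\<forall>x\<in>set t. x \<ge> 1) \<and> t ! 0 = 1 \<and> t ! 1 \<ge> 2
                          \<and> sum_list t = n})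
           (scale (int k - 1)
             (Hsum word {t. length t = k \<and> (\<forall>x\<in>set t. x \<ge> 1) \<and> t ! 0 \<ge> 2 \<and> t ! 1 = 1
                            \<and> sum_list t = n})))
           (scale (int k)
             (Hsum word {t. length t = k \<and> (\<forall>x\<in>set t. x \<ge> 1) \<and> t ! 0 \<ge> 2 \<and> t ! 1 \<ge> 2
                            \<and> sum_list t = n})))
           (scale (int n - int k)
             (Hsum word {u. length u = k - 1 \<and> (\<forall>x\<in>set u. x \<ge> 1) \<and> u ! 0 \<ge> 2
                            \<and> sum_list u = n}))"
proof (rule ext)
  fix w :: "nat list"
  let ?A = "{(r, s). r \<ge> 1 \<and> length s = k - 1 \<and> (\<forall>x\<in>set s. x \<ge> 1) \<and> s ! 0 \<ge> 2
                    \<and> r + sum_list s = n}"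
  have Aeq: "?A = AA k n" by (simp add: AA_def)
  have fA: "finite (AA k n)" by (rule finite_AA)
  have k2: "2 \<le> k" by (rule assms(1))
  let ?I = "\<lambda>i x. (of_bool (i < length w \<and> x = (w!i, take i w @ drop (Suc i) w)) :: int)"
  let ?M = "\<lambda>i x. (of_bool (i < length w \<and> fst x \<le> w!i \<and> snd x = w[i := w!i - fst x]) :: int)"
  have "Hsum (\<lambda>(r, s). stuffle [r] s) ?A w = (\<Sum>x\<in>AA k n. stuffle [fst x] (snd x) w)"
    unfolding Hsum_def Aeq by (simp add: case_prod_beta)
  also have "\<dots> = (\<Sum>x\<in>AA k n. (\<Sum>i\<le>k-1. ?I i x) + (\<Sum>i<k-1. ?M i x))"
  proof (rule sum.cong[OF refl])
    fix x assume x: "x \<in> AA k n"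
    obtain r s where rs: "x = (r, s)" by (cases x)
    have ls: "length s = k - 1" using x rs by (simp add: AA_def)
    have a: "(\<Sum>i\<le>length s. (of_bool (w = take i s @ r # drop i s)::int)) = (\<Sum>i\<le>k-1. ?I i x)"
      by (rule sum.cong) (auto simp: ls rs ins_iff)
    have b: "(\<Sum>i<length s. (of_bool (w = s[i := r + s!i])::int)) = (\<Sum>i<k-1. ?M i x)"
      by (rule sum.cong) (auto simp: ls rs merge_iff)
    show "stuffle [fst x] (snd x) w = (\<Sum>i\<le>k-1. ?I i x) + (\<Sum>i<k-1. ?M i x)"
      using stuffle_single[of r s w] a b rs by simp
  qed
  also have "\<dots> = (\<Sum>i\<le>k-1. \<Sum>x\<in>AA k n. ?I i x) + (\<Sum>i<k-1. \<Sum>x\<in>AA k n. ?M i x)"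
    by (simp only: sum.distrib sum.swap[of _ "AA k n"])
  also have "(\<Sum>i\<le>k-1. \<Sum>x\<in>AA k n. ?I i x)
     = (\<Sum>i\<le>k - 1. (of_bool (i < length w \<and> (w!i, take i w @ drop (Suc i) w) \<in> AA k n) :: int))"
    by (rule sum.cong[OF refl]) (rule sum_delta_pair[OF fA])
  also have "(\<Sum>i<k-1. \<Sum>x\<in>AA k n. ?M i x)
     = (\<Sum>i<k-1. int (card {r. i < length w \<and> r \<le> w!i \<and> (r, w[i := w!i - r]) \<in> AA k n}))"
  proof (rule sum.cong[OF refl])
    fix i
    let ?g = "\<lambda>r. (r, w[i := w!i - r])"
    have e: "AA k n \<inter> {x. i < length w \<and> fst x \<le> w!i \<and> snd x = w[i := w!i - fst x]}
        = ?g ` {r. i < length w \<and> r \<le> w!i \<and> (r, w[i := w!i - r]) \<in> AA k n}"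
      by auto
    have inj: "inj_on ?g X" for X by (rule inj_onI) simp
    show "(\<Sum>x\<in>AA k n. ?M i x) = int (card {r. i < length w \<and> r \<le> w!i \<and> (r, w[i := w!i - r]) \<in> AA k n})"
      using fA by (simp only: sum_of_bool_eq e card_image[OF inj])
  qed
  finally have L: "Hsum (\<lambda>(r, s). stuffle [r] s) ?A w
     = of_bool (length w = k \<and> Good n w) * (of_bool (w!1 \<ge> 2) + (int k - 1) * of_bool (w!0 \<ge> 2))
       + (if length w = k-1 \<and> Good n w \<and> w!0 \<ge> 2 then int n - int k else 0)"
    by (simp only: ins_part[OF k2] merge_part[OF k2])
  let ?B1 = "{t. length t = k \<and> (\<forall>x\<in>set t. x \<ge> 1) \<and> t ! 0 = 1 \<and> t ! 1 \<ge> 2 \<and> sum_list t = n}"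
  let ?B2 = "{t. length t = k \<and> (\<forall>x\<in>set t. x \<ge> 1) \<and> t ! 0 \<ge> 2 \<and> t ! 1 = 1 \<and> sum_list t = n}"
  let ?B3 = "{t. length t = k \<and> (\<forall>x\<in>set t. x \<ge> 1) \<and> t ! 0 \<ge> 2 \<and> t ! 1 \<ge> 2 \<and> sum_list t = n}"
  let ?B4 = "{u. length u = k - 1 \<and> (\<forall>x\<in>set u. x \<ge> 1) \<and> u ! 0 \<ge> 2 \<and> sum_list u = n}"
  have R: "Hadd (Hadd (Hadd (Hsum word ?B1) (scale (int k - 1) (Hsum word ?B2))) (scale (int k) (Hsum word ?B3)))
            (scale (int n - int k) (Hsum word ?B4)) w
     = of_bool (w \<in> ?B1) + (int k - 1) * of_bool (w \<in> ?B2) + int k * of_bool (w \<in> ?B3)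
       + (int n - int k) * of_bool (w \<in> ?B4)"
  proof -
    have f: "finite ?B1" "finite ?B2" "finite ?B3" "finite ?B4" by (rule finite_words'; simp)+
    show ?thesis unfolding Hadd_def scale_def by (simp only: Hsum_word_at[OF f(1)] Hsum_word_at[OF f(2)]
      Hsum_word_at[OF f(3)] Hsum_word_at[OF f(4)])
  qed
  have g01: "w!0 \<ge> 1 \<and> w!1 \<ge> 1" if "length w = k" "Good n w"
    using that k2 unfolding Good_def by (simp add: all_set_conv_all_nth)
  show "Hsum (\<lambda>(r, s). stuffle [r] s) ?A w = Hadd (Hadd (Hadd (Hsum word ?B1) (scale (int k - 1) (Hsum word ?B2))) (scale (int k) (Hsum word ?B3)))
            (scale (int n - int k) (Hsum word ?B4)) w"
  proof -
    have m1: "(w \<in> ?B1) = (length w = k \<and> Good n w \<and> w!0 = 1 \<and> w!1 \<ge> 2)" by (auto simp: Good_def)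
    have m2: "(w \<in> ?B2) = (length w = k \<and> Good n w \<and> w!0 \<ge> 2 \<and> w!1 = 1)" by (auto simp: Good_def)
    have m3: "(w \<in> ?B3) = (length w = k \<and> Good n w \<and> w!0 \<ge> 2 \<and> w!1 \<ge> 2)" by (auto simp: Good_def)
    have m4: "(w \<in> ?B4) = (length w = k - 1 \<and> Good n w \<and> w!0 \<ge> 2)" by (auto simp: Good_def)
    have fin: "of_bool (length w = k \<and> Good n w) * (of_bool (w!1 \<ge> 2) + (int k - 1) * of_bool (w!0 \<ge> 2))
       + (if length w = k-1 \<and> Good n w \<and> w!0 \<ge> 2 then int n - int k else 0)
     = of_bool (w \<in> ?B1) + (int k - 1) * of_bool (w \<in> ?B2) + int k * of_bool (w \<in> ?B3)
       + (int n - int k) * of_bool (w \<in> ?B4)"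
    proof (cases "length w = k \<and> Good n w")
      case True
      then have "length w \<noteq> k - 1" using k2 by auto
      moreover have "w!0 = 1 \<or> w!0 \<ge> 2" "w!1 = 1 \<or> w!1 \<ge> 2" using g01 True by auto
      ultimately show ?thesis using True k2 by (auto simp: Good_def)
    next
      case False
      then show ?thesis by (auto simp: Good_def)
    qed
    show ?thesis unfolding L R by (rule fin)
  qed
qed

end
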